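(* Let $A$ be a unital $C^*$-algebra with a strongly continuous action $\sigma$ of $S^1$, and let $\mathcal A\subseteq A$ be a norm-dense unital $*$-subalgebra. Suppose $P_0(\mathcal A)\subseteq\mathcal A$ and that there exist finitely many $\zeta_1^R,\dots,\zeta_k^R\in\mathcal A\cap A_1$ and $\zeta_1^L,\dots,\zeta_m^L\in\mathcal A\cap A_1$ with $\sum_{j=1}^k\zeta_j^R(\zeta_j^R)^*=1=\sum_{j=1}^m(\zeta_j^L)^*\zeta_j^L$. Then for every $n\in\mathbb Z$: $P_n(\mathcal A)=\mathcal A_n:=\mathcal A\cap A_n$, and there exist finitely many $\zeta_{(n,1)},\dots,\zeta_{(n,m_n)}\in\mathcal A_n$ such that $\sum_{j=1}^{m_n}\zeta_{(n,j)}\zeta_{(n,j)}^*=1$. In particular, $\mathcal A_n$ is norm-dense in $A_n$ and has a finite frame.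
   Context: $A_n:=\{a\in A:\sigma_\lambda(a)=\lambda^na\ \forall\lambda\in S^1\}$ and $P_n(a):=\frac1{2\pi}\int_0^{2\pi}e^{-itn}\sigma_{e^{it}}(a)dt$. $A_n$ is regarded as a right Hilbert $C^*$-module over $A_0$ with inner product $\langle a,b\rangle=a^*b$. A finite frame for $\mathcal A_n$ is a finite family $\zeta_1,\dots,\zeta_p\in\mathcal A_n$ with $\sum_j\zeta_j\zeta_j^*x=x$ for all $x\in\mathcal A_n$. *)

theory Defs
  imports "HOL-Analysis.Analysis"
begin

text \<open>A unital C*-algebra is modelled on a type 'a of class real_normed_algebra_1 and banach
  (complete normed real algebra with unit of norm 1), together with a complex scalar
  multiplication sc extending the real one and an involution st satisfying the C*-identity.\<close>

definition cstar_alg :: "(complex \<Rightarrow> 'a::{real_normed_algebra_1,banach} \<Rightarrow> 'a) \<Rightarrow> ('a \<Rightarrow> 'a) \<Rightarrow> bool" where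
  "cstar_alg sc st \<longleftrightarrow>
     (\<forall>r x. sc (complex_of_real r) x = r *\<^sub>R x) \<and>
     (\<forall>c d x. sc (c * d) x = sc c (sc d x)) \<and>
     (\<forall>c x y. sc c (x + y) = sc c x + sc c y) \<and>
     (\<forall>c d x. sc (c + d) x = sc c x + sc d x) \<and>
     (\<forall>c x y. sc c (x * y) = sc c x * y \<and> sc c (x * y) = x * sc c y) \<and>
     (\<forall>c x. norm (sc c x) = cmod c * norm x) \<and>
     (\<forall>x. st (st x) = x) \<and>
     (\<forall>x y. st (x + y) = st x + st y) \<and>
     (\<forall>c x. st (sc c x) = sc (cnj c) (st x)) \<and>
     (\<forall>x y. st (x * y) = st y * st x) \<and>
     (\<forall>x. norm (st x * x) = (norm x)\<^sup>2)"

definition s1_action :: "(complex \<Rightarrow> 'a::{real_normed_algebra_1,banach} \<Rightarrow> 'a) \<Rightarrow> ('a \<Rightarrow> 'a)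
    \<Rightarrow> (complex \<Rightarrow> 'a \<Rightarrow> 'a) \<Rightarrow> bool" where
  "s1_action sc st \<sigma> \<longleftrightarrow>
     (\<forall>l. cmod l = 1 \<longrightarrow>
        (\<forall>c x. \<sigma> l (sc c x) = sc c (\<sigma> l x)) \<and>
        (\<forall>x y. \<sigma> l (x + y) = \<sigma> l x + \<sigma> l y) \<and>
        (\<forall>x y. \<sigma> l (x * y) = \<sigma> l x * \<sigma> l y) \<and>
        \<sigma> l 1 = 1 \<and>
        (\<forall>x. \<sigma> l (st x) = st (\<sigma> l x))) \<and>
     (\<forall>x. \<sigma> 1 x = x) \<and>
     (\<forall>l m x. cmod l = 1 \<longrightarrow> cmod m = 1 \<longrightarrow> \<sigma> (l * m) x = \<sigma> l (\<sigma> m x)) \<and>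
     (\<forall>x. continuous_on (sphere 0 1) (\<lambda>l. \<sigma> l x))"

definition spec_sub :: "(complex \<Rightarrow> 'a \<Rightarrow> 'a) \<Rightarrow> (complex \<Rightarrow> 'a \<Rightarrow> 'a) \<Rightarrow> int \<Rightarrow> 'a set" where
  "spec_sub sc \<sigma> n = {a. \<forall>l. cmod l = 1 \<longrightarrow> \<sigma> l a = sc (l powi n) a}"

definition spec_proj :: "(complex \<Rightarrow> 'a::{real_normed_algebra_1,banach} \<Rightarrow> 'a)
    \<Rightarrow> (complex \<Rightarrow> 'a \<Rightarrow> 'a) \<Rightarrow> int \<Rightarrow> 'a \<Rightarrow> 'a" where
  "spec_proj sc \<sigma> n a = (1 / (2 * pi)) *\<^sub>R
     integral {0 .. 2 * pi}
       (\<lambda>t. sc (exp (- \<i> * complex_of_real t * of_int n)) (\<sigma> (exp (\<i> * complex_of_real t)) a))"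

definition dense_unital_star_subalg :: "(complex \<Rightarrow> 'a::{real_normed_algebra_1,banach} \<Rightarrow> 'a)
    \<Rightarrow> ('a \<Rightarrow> 'a) \<Rightarrow> 'a set \<Rightarrow> bool" where
  "dense_unital_star_subalg sc st B \<longleftrightarrow>
     1 \<in> B \<and>
     (\<forall>x\<in>B. \<forall>y\<in>B. x + y \<in> B \<and> x * y \<in> B) \<and>
     (\<forall>c. \<forall>x\<in>B. sc c x \<in> B) \<and>
     (\<forall>x\<in>B. st x \<in> B) \<and>
     closure B = UNIV"

end

theory Submission
  imports Defs "HOL-Computational_Algebra.Formal_Power_Series"
begin

locale cstar =
  fixes sc :: "complex \<Rightarrow> 'a::{real_normed_algebra_1,banach} \<Rightarrow> 'a"
    and st :: "'a \<Rightarrow> 'a"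
  assumes cs: "cstar_alg sc st"
begin
lemmas csd = cs[unfolded cstar_alg_def]

lemma sc_real: "sc (complex_of_real r) x = r *\<^sub>R x" using csd by meson
lemma sc_mult: "sc (c * d) x = sc c (sc d x)" using csd by meson
lemma sc_add_right: "sc c (x + y) = sc c x + sc c y" using csd by meson
lemma sc_add_left: "sc (c + d) x = sc c x + sc d x" using csd by meson
lemma sc_mult_left: "sc c (x * y) = sc c x * y" using csd by meson
lemma sc_mult_right: "sc c (x * y) = x * sc c y" using csd by meson
lemma sc_norm: "norm (sc c x) = cmod c * norm x" using csd by meson
lemma st_st[simp]: "st (st x) = x" using csd by meson
lemma st_add: "st (x + y) = st x + st y" using csd by meson
lemma st_sc: "st (sc c x) = sc (cnj c) (st x)" using csd by meson
lemma st_mult: "st (x * y) = st y * st x" using csd by meson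
lemma cstar_id: "norm (st x * x) = (norm x)\<^sup>2" using csd by meson

lemma sc_one[simp]: "sc 1 x = x" using sc_real[of 1 x] by simp
lemma sc_zero_left[simp]: "sc 0 x = 0" using sc_real[of 0 x] by simp
lemma sc_zero_right[simp]: "sc c 0 = 0" using sc_add_right[of c 0 0] by simp
lemma sc_neg_left: "sc (- c) x = - sc c x"
  using sc_add_left[of "-c" c x] by (simp add: eq_neg_iff_add_eq_0)
lemma sc_minus_one[simp]: "sc (-1) x = - x" using sc_neg_left[of 1 x] by simp
lemma sc_neg_right: "sc c (- x) = - sc c x"
  using sc_add_right[of c "-x" x] by (simp add: eq_neg_iff_add_eq_0)
lemma sc_diff_right: "sc c (x - y) = sc c x - sc c y"
  using sc_add_right[of c x "-y"] sc_neg_right[of c y] by simp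
lemma sc_scaleR: "sc c (r *\<^sub>R x) = r *\<^sub>R sc c x"
  by (metis mult.commute sc_mult sc_real)
lemma sc_sum_right: "sc c (sum f S) = (\<Sum>i\<in>S. sc c (f i))"
  by (induction S rule: infinite_finite_induct) (auto simp: sc_add_right)

lemma bl_sc: "bounded_linear (sc c)"
  by (rule bounded_linear_intro[where K="cmod c"]) (auto simp: sc_add_right sc_scaleR sc_norm mult.commute)

lemma sc_decomp: "sc c x = Re c *\<^sub>R x + Im c *\<^sub>R sc \<i> x"
proof -
  have "c = complex_of_real (Re c) + complex_of_real (Im c) * \<i>"
    by (simp add: complex_eq_iff)
  then have "sc c x = sc (complex_of_real (Re c)) x + sc (complex_of_real (Im c)) (sc \<i> x)"
    by (metis sc_add_left sc_mult)
  then show ?thesis by (simp add: sc_real)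
qed

lemma st_zero[simp]: "st 0 = 0" using st_add[of 0 0] by simp
lemma st_neg: "st (- x) = - st x"
  using st_add[of "-x" x] by (simp add: eq_neg_iff_add_eq_0)
lemma st_diff: "st (x - y) = st x - st y" using st_add[of x "-y"] st_neg[of y] by simp
lemma st_scaleR: "st (r *\<^sub>R x) = r *\<^sub>R st x"
  using st_sc[of "complex_of_real r" x] by (simp add: sc_real)
lemma st_one[simp]: "st 1 = 1"
  using st_mult[of "st 1" 1] by simp
lemma st_sum: "st (sum f S) = (\<Sum>i\<in>S. st (f i))"
  by (induction S rule: infinite_finite_induct) (auto simp: st_add)

lemma norm_st_ge: "norm x \<le> norm (st x)"
proof (cases "x = 0")
  case False
  have "(norm x)^2 \<le> norm (st x) * norm x" using cstar_id[of x] norm_mult_ineq[of "st x" x] by simp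
  then show ?thesis using False by (simp add: power2_eq_square)
qed simp

lemma norm_st[simp]: "norm (st x) = norm x"
  using norm_st_ge[of x] norm_st_ge[of "st x"] by simp

lemma bl_st: "bounded_linear st"
  by (rule bounded_linear_intro[where K=1]) (auto simp: st_add st_scaleR)

lemma st_power: "st w = w \<Longrightarrow> st (w ^ j) = w ^ j"
  by (induction j) (auto simp: st_mult power_commutes)

lemma gchoose_half_le: "\<bar>(1/2::real) gchoose j\<bar> \<le> 1"
proof (induction j)
  case (Suc j)
  have e: "real (Suc j) * ((1/2::real) gchoose Suc j) = (1/2 - real j) * ((1/2::real) gchoose j)"
    using gbinomial_mult_1[of "1/2::real" j] by (simp add: algebra_simps)
  have "real (Suc j) * \<bar>(1/2::real) gchoose Suc j\<bar> = \<bar>1/2 - real j\<bar> * \<bar>(1/2::real) gchoose j\<bar>"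
    using arg_cong[OF e, of abs] by (simp add: abs_mult)
  also have "\<dots> \<le> real (Suc j) * 1"
    using Suc by (intro mult_mono) auto
  finally show ?case by simp
qed simp

lemma one_gchoose: "(1::real) gchoose k = (if k \<le> 1 then 1 else 0)"
proof -
  have "(1::real) gchoose k = of_nat (1 choose k)"
    using binomial_gbinomial[of 1 k, where 'a=real] by simp
  moreover have "k = 0 \<or> k = 1 \<or> k > 1" by auto
  ultimately show ?thesis by (auto simp: binomial_eq_0)
qed

lemma sqrt_exists:
  assumes sw: "st w = w" and nw: "norm w < 1"
  shows "\<exists>s. st s = s \<and> s * s = 1 - w \<and> (\<forall>y. y * w = w * y \<longrightarrow> y * s = s * y)"
proof -
  define c where "c j = (-1)^j * ((1/2::real) gchoose j)" for j
  define a where "a j = c j *\<^sub>R w ^ j" for j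
  have cle: "\<bar>c j\<bar> \<le> 1" for j using gchoose_half_le[of j] by (simp add: c_def abs_mult)
  have na: "norm (a j) \<le> norm w ^ j" for j
  proof -
    have "norm (a j) = \<bar>c j\<bar> * norm (w ^ j)" by (simp add: a_def)
    also have "\<dots> \<le> 1 * norm w ^ j"
      using cle[of j] norm_power_ineq[of w j] by (intro mult_mono) auto
    finally show ?thesis by simp
  qed
  have sa: "summable (\<lambda>j. norm (a j))"
    by (rule summable_comparison_test'[OF summable_geometric[of "norm w"]]) (use nw na in auto)
  then have sa': "summable a" by (rule summable_norm_cancel)
  define s where "s = suminf a"
  have cc: "(\<Sum>i\<le>k. c i * c (k - i)) = (if k = 0 then 1 else if k = 1 then -1 else 0)" for k
  proof -
    have "(\<Sum>i\<le>k. c i * c (k - i)) = (\<Sum>i\<le>k. (-1)^k * (((1/2::real) gchoose i) * ((1/2) gchoose (k - i))))"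
      by (rule sum.cong) (auto simp: c_def power_add[symmetric])
    also have "\<dots> = (-1)^k * ((1::real) gchoose k)"
      using gbinomial_Vandermonde[of "1/2::real" "1/2" k]
      by (simp add: sum_distrib_left[symmetric] atLeast0AtMost)
    finally show ?thesis by (auto simp: one_gchoose)
  qed
  have "s * s = (\<Sum>k. \<Sum>i\<le>k. a i * a (k - i))"
    unfolding s_def by (rule Cauchy_product[OF sa sa])
  also have "\<dots> = (\<Sum>k. (if k = 0 then 1 else if k = 1 then -1 else 0) *\<^sub>R w ^ k)"
  proof -
    have "(\<Sum>i\<le>k. a i * a (k - i)) = (\<Sum>i\<le>k. c i * c (k - i)) *\<^sub>R w ^ k" for k
      unfolding scaleR_sum_left
      by (rule sum.cong) (auto simp: a_def power_add[symmetric])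
    then show ?thesis by (simp only: cc)
  qed
  also have "\<dots> = (\<Sum>k\<in>{0,1}. (if k = 0 then 1 else if k = 1 then -1 else 0) *\<^sub>R w ^ k)"
    by (rule suminf_finite) auto
  also have "\<dots> = 1 - w" by simp
  finally have ss: "s * s = 1 - w" .
  have "st s = (\<Sum>j. st (a j))"
    unfolding s_def by (rule bounded_linear.suminf[OF bl_st sa'])
  also have "\<dots> = s" unfolding s_def a_def by (simp add: st_scaleR st_power[OF sw])
  finally have sts: "st s = s" .
  have comm: "y * s = s * y" if yw: "y * w = w * y" for y
  proof -
    have yp: "y * w ^ j = w ^ j * y" for j
    proof (induction j)
      case (Suc j)
      have "y * w ^ Suc j = (y * w ^ j) * w" by (simp add: power_Suc2 mult.assoc del: power_Suc)
      also have "\<dots> = w ^ j * (y * w)" by (simp add: Suc mult.assoc)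
      also have "\<dots> = w ^ Suc j * y" by (simp add: yw power_Suc2 mult.assoc del: power_Suc)
      finally show ?case .
    qed simp
    have "y * s = (\<Sum>j. y * a j)" unfolding s_def by (rule suminf_mult[OF sa', symmetric])
    also have "\<dots> = (\<Sum>j. a j * y)" by (simp add: a_def yp)
    also have "\<dots> = s * y" unfolding s_def by (rule suminf_mult2[OF sa', symmetric])
    finally show ?thesis .
  qed
  show ?thesis using sts ss comm by blast
qed

lemma st_sc_i: "st (sc \<i> b) = - sc \<i> (st b)"
  by (simp add: st_sc sc_neg_left)

lemma sc_i_i: "sc \<i> (sc \<i> b) = - b"
  by (simp add: sc_mult[symmetric])

lemma sc_ml: "sc c x * y = sc c (x * y)" by (simp add: sc_mult_left)
lemma sc_mr: "x * sc c y = sc c (x * y)" by (simp add: sc_mult_right)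

lemma hom_bound:
  assumes hadd: "\<And>x y. \<phi> (x + y) = \<phi> x + \<phi> y"
    and hmul: "\<And>x y. \<phi> (x * y) = \<phi> x * \<phi> y"
    and h1: "\<phi> 1 = 1"
    and hsc: "\<And>c x. \<phi> (sc c x) = sc c (\<phi> x)"
    and hst: "\<And>x. \<phi> (st x) = st (\<phi> x)"
  shows "norm (\<phi> x) \<le> 2 * norm x"
proof -
  have h0: "\<phi> 0 = 0" using hadd[of 0 0] by simp
  have hR: "\<phi> (r *\<^sub>R x) = r *\<^sub>R \<phi> x" for r x using hsc[of "complex_of_real r" x] by (simp add: sc_real)
  have sa: "norm (\<phi> h) \<le> 2 * norm h" if sh: "st h = h" for h
  proof (cases "h = 0")
    case True then show ?thesis by (simp add: h0)
  next
    case False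
    define r where "r = 2 * norm h"
    have rpos: "r > 0" using False by (simp add: r_def)
    define y where "y = (1 / r) *\<^sub>R h"
    have sy: "st y = y" by (simp add: y_def st_scaleR sh)
    have ny: "norm y = 1/2" using False by (simp add: y_def r_def)
    define w where "w = y * y"
    have sw: "st w = w" by (simp add: w_def st_mult sy)
    have nw: "norm w < 1" using norm_mult_ineq[of y y] ny by (simp add: w_def)
    obtain s where ss: "st s = s" and s2: "s * s = 1 - w" and sc': "\<And>y'. y' * w = w * y' \<Longrightarrow> y' * s = s * y'"
      using sqrt_exists[OF sw nw] by blast
    have ys: "y * s = s * y" by (rule sc') (simp add: w_def mult.assoc)
    define a where "a = \<phi> y"
    define b where "b = \<phi> s"
    have sta: "st a = a" by (simp add: a_def hst[symmetric] sy)
    have stb: "st b = b" by (simp add: b_def hst[symmetric] ss)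
    have ab: "a * b = b * a" by (simp add: a_def b_def hmul[symmetric] ys)
    have aabb: "a * a + b * b = 1"
      by (simp add: a_def b_def hmul[symmetric] hadd[symmetric] s2 w_def h1)
    define z where "z = a + sc \<i> b"
    have stz: "st z = a - sc \<i> b" by (simp add: z_def st_add st_sc_i sta stb)
    have "(a - sc \<i> b) * (a + sc \<i> b) = a * a + b * b"
      by (simp add: algebra_simps sc_ml sc_mr sc_i_i ab sc_diff_right sc_add_right sc_neg_right)
    then have "st z * z = a * a + b * b" unfolding stz by (simp add: z_def)
    then have "st z * z = 1" using aabb by simp
    then have "(norm z)^2 = 1" using cstar_id[of z] by simp
    then have nz: "norm z = 1" using norm_ge_zero[of z] by (auto simp add: power2_eq_1_iff)
    have "z + st z = 2 *\<^sub>R a" unfolding stz by (simp add: z_def scaleR_2)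
    then have "norm (2 *\<^sub>R a) \<le> 2" using norm_triangle_ineq[of z "st z"] nz by simp
    then have na: "norm a \<le> 1" by simp
    have "\<phi> h = r *\<^sub>R a" using rpos by (simp add: a_def y_def hR[symmetric])
    then have "norm (\<phi> h) = r * norm a" using rpos by simp
    also have "\<dots> \<le> r" using na rpos by (simp add: mult_le_cancel_left1)
    finally show ?thesis by (simp add: r_def)
  qed
  have "(norm (\<phi> x))^2 = norm (\<phi> (st x * x))" by (simp add: hmul hst cstar_id)
  also have "\<dots> \<le> 2 * norm (st x * x)" by (rule sa) (simp add: st_mult)
  also have "\<dots> = 2 * (norm x)^2" by (simp add: cstar_id)
  also have "\<dots> \<le> (2 * norm x)^2" by (simp add: power_mult_distrib)
  finally show ?thesis by (rule power2_le_imp_le) simp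
qed

end

lemma shift_int:
  fixes f :: "real \<Rightarrow> 'b::banach"
  assumes "f integrable_on {a+c..b+c}"
  shows "integral {a..b} (\<lambda>x. f (c + x)) = integral {a+c..b+c} f"
proof -
  have "(f has_integral integral {a+c..b+c} f) (cbox (a+c) (b+c))"
    using assms by (simp add: has_integral_integral)
  from has_integral_affinity[OF this, of 1 c]
  have "((\<lambda>x. f (x + c)) has_integral integral {a+c..b+c} f) ((\<lambda>x. x - c) ` {a+c..b+c})"
    by simp
  moreover have "(\<lambda>x. x - c) ` {a+c..b+c} = {a..b}"
    by (auto simp: image_iff intro!: bexI[where x="_ + c"])
  ultimately show ?thesis by (simp add: add.commute integral_unique)
qed

lemma periodic_integral:
  fixes f :: "real \<Rightarrow> 'b::banach"
  assumes cf: "continuous_on UNIV f" and per: "\<And>t. f (t + 2*pi) = f t"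
    and th: "0 \<le> \<theta>" "\<theta> \<le> 2*pi"
  shows "integral {0..2*pi} (\<lambda>t. f (\<theta> + t)) = integral {0..2*pi} f"
proof -
  have int: "f integrable_on {a..b}" for a b
    by (rule integrable_continuous_interval) (rule continuous_on_subset[OF cf], simp)
  have "integral {0..2*pi} (\<lambda>t. f (\<theta> + t)) = integral {\<theta>..2*pi+\<theta>} f"
    using shift_int[of f 0 \<theta> "2*pi"] int by simp
  also have "\<dots> = integral {\<theta>..2*pi} f + integral {2*pi..2*pi+\<theta>} f"
    using Henstock_Kurzweil_Integration.integral_combine[where a=\<theta> and c="2*pi" and b="2*pi+\<theta>" and f=f] th int by simp
  also have "integral {2*pi..2*pi+\<theta>} f = integral {0..\<theta>} f"
  proof -
    have "(\<lambda>x. f (2*pi + x)) = f" by (rule ext) (simp add: per add.commute)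
    then show ?thesis using shift_int[of f 0 "2*pi" \<theta>] int by (simp add: add.commute)
  qed
  also have "integral {\<theta>..2*pi} f + integral {0..\<theta>} f = integral {0..2*pi} f"
    using Henstock_Kurzweil_Integration.integral_combine[where a=0 and c=\<theta> and b="2*pi" and f=f] th int by (simp add: add.commute)
  finally show ?thesis .
qed

locale s1act = cstar sc st for sc :: "complex \<Rightarrow> 'a::{real_normed_algebra_1,banach} \<Rightarrow> 'a" and st +
  fixes \<sigma> :: "complex \<Rightarrow> 'a \<Rightarrow> 'a"
  assumes act: "s1_action sc st \<sigma>"
begin

lemmas actd = act[unfolded s1_action_def]

lemma s_sc: "cmod l = 1 \<Longrightarrow> \<sigma> l (sc c x) = sc c (\<sigma> l x)" using actd by meson
lemma s_add: "cmod l = 1 \<Longrightarrow> \<sigma> l (x + y) = \<sigma> l x + \<sigma> l y" using actd by meson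
lemma s_mult: "cmod l = 1 \<Longrightarrow> \<sigma> l (x * y) = \<sigma> l x * \<sigma> l y" using actd by meson
lemma s_one: "cmod l = 1 \<Longrightarrow> \<sigma> l 1 = 1" using actd by meson
lemma s_st: "cmod l = 1 \<Longrightarrow> \<sigma> l (st x) = st (\<sigma> l x)" using actd by meson
lemma s_comp_all: "\<forall>l m x. cmod l = 1 \<longrightarrow> cmod m = 1 \<longrightarrow> \<sigma> (l * m) x = \<sigma> l (\<sigma> m x)"
  by (rule conjunct1[OF conjunct2[OF conjunct2[OF actd]]])
lemma s_comp: "cmod l = 1 \<Longrightarrow> cmod m = 1 \<Longrightarrow> \<sigma> (l * m) x = \<sigma> l (\<sigma> m x)" using s_comp_all by blast
lemma s_cont: "continuous_on (sphere 0 1) (\<lambda>l. \<sigma> l x)" using actd by meson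

lemma s_bound: "cmod l = 1 \<Longrightarrow> norm (\<sigma> l x) \<le> 2 * norm x"
  by (rule hom_bound) (auto simp: s_sc s_add s_mult s_one s_st)

lemma s_scaleR: "cmod l = 1 \<Longrightarrow> \<sigma> l (r *\<^sub>R x) = r *\<^sub>R \<sigma> l x"
  using s_sc[of l "complex_of_real r" x] by (simp add: sc_real)

lemma bl_s: assumes "cmod l = 1" shows "bounded_linear (\<sigma> l)"
proof (rule bounded_linear_intro[where K=2])
  show "norm (\<sigma> l x) \<le> norm x * 2" for x using s_bound[OF assms, of x] by linarith
qed (use assms in \<open>auto simp: s_add s_scaleR\<close>)

definition gi :: "int \<Rightarrow> 'a \<Rightarrow> real \<Rightarrow> 'a" where
  "gi n a t = sc (exp (- \<i> * complex_of_real t * of_int n)) (\<sigma> (exp (\<i> * complex_of_real t)) a)"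

lemma P_def': "spec_proj sc \<sigma> n a = (1 / (2 * pi)) *\<^sub>R integral {0 .. 2 * pi} (gi n a)"
  unfolding spec_proj_def gi_def by (rule refl)

lemma cmod_e[simp]: "cmod (exp (\<i> * complex_of_real t)) = 1"
  by (simp add: norm_exp_i_times)

lemma cont_sc: "continuous_on S f \<Longrightarrow> continuous_on S v \<Longrightarrow> continuous_on S (\<lambda>t. sc (f t) (v t))"
proof -
  assume f: "continuous_on S f" and v: "continuous_on S v"
  have e: "(\<lambda>t. sc (f t) (v t)) = (\<lambda>t. Re (f t) *\<^sub>R v t + Im (f t) *\<^sub>R sc \<i> (v t))"
    by (rule ext) (rule sc_decomp)
  show ?thesis unfolding e
    by (intro continuous_intros bounded_linear.continuous_on[OF bl_sc] f v)
qed

lemma gi_cont: "continuous_on UNIV (gi n a)"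
proof -
  have "continuous_on UNIV (\<lambda>t. \<sigma> (exp (\<i> * complex_of_real t)) a)"
    by (rule continuous_on_compose2[OF s_cont]) (auto intro!: continuous_intros)
  then show ?thesis unfolding gi_def
    by (intro cont_sc) (auto intro!: continuous_intros)
qed

lemma gi_int: "gi n a integrable_on {x..y}"
  by (rule integrable_continuous_interval) (rule continuous_on_subset[OF gi_cont], simp)

lemma P_add: "spec_proj sc \<sigma> n (a + b) = spec_proj sc \<sigma> n a + spec_proj sc \<sigma> n b"
proof -
  have "gi n (a + b) = (\<lambda>t. gi n a t + gi n b t)"
    by (rule ext) (simp add: gi_def s_add sc_add_right)
  then show ?thesis unfolding P_def' by (simp add: integral_add[OF gi_int gi_int] scaleR_add_right)
qed

lemma P_zero: "spec_proj sc \<sigma> n 0 = 0"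
  using P_add[of n 0 0] by simp

lemma P_diff: "spec_proj sc \<sigma> n (a - b) = spec_proj sc \<sigma> n a - spec_proj sc \<sigma> n b"
  using P_add[of n "a - b" b] by (simp add: algebra_simps)

lemma P_sum: "spec_proj sc \<sigma> n (\<Sum>i\<in>S. f i) = (\<Sum>i\<in>S. spec_proj sc \<sigma> n (f i))"
  by (induction S rule: infinite_finite_induct) (auto simp: P_add P_zero)

lemma P_bound: "norm (spec_proj sc \<sigma> n a) \<le> 2 * norm a"
proof -
  have "norm (integral {0..2*pi} (gi n a)) \<le> (2 * norm a) * (2*pi - 0)"
  proof (rule integral_bound)
    show "continuous_on {0..2*pi} (gi n a)" by (rule continuous_on_subset[OF gi_cont]) simp
    fix t show "norm (gi n a t) \<le> 2 * norm a"
      using s_bound[of "exp (\<i> * complex_of_real t)" a]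
      by (simp add: gi_def sc_norm norm_exp_i_times)
  qed simp
  then show ?thesis unfolding P_def' by (simp add: field_simps)
qed

lemma exp_mul_n: "exp (\<i> * complex_of_real t) powi m = exp (\<i> * complex_of_real t * of_int m)"
  by (subst exp_power_int) (simp add: mult_ac)

lemma P_eigen:
  assumes "x \<in> spec_sub sc \<sigma> n"
  shows "spec_proj sc \<sigma> n x = x"
proof -
  have "gi n x t = x" for t
  proof -
    have "gi n x t = sc (exp (- \<i> * complex_of_real t * of_int n)) (sc (exp (\<i> * complex_of_real t) powi n) x)"
      using assms unfolding gi_def spec_sub_def by simp
    also have "\<dots> = sc (exp (- \<i> * complex_of_real t * of_int n) * exp (\<i> * complex_of_real t * of_int n)) x"
      by (simp add: sc_mult exp_mul_n)
    also have "\<dots> = x" by (simp add: exp_add[symmetric])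
    finally show ?thesis .
  qed
  then have "gi n x = (\<lambda>t. x)" by auto
  then show ?thesis unfolding P_def' by simp
qed


end


context s1act begin
lemma cnj_unit: "cmod l = 1 \<Longrightarrow> cnj l = inverse l"
proof -
  assume l: "cmod l = 1"
  have "l * cnj l = 1" using complex_norm_square[of l] l by simp
  then show ?thesis by (simp add: inverse_unique)
qed

lemma spec_st: assumes "z \<in> spec_sub sc \<sigma> m" shows "st z \<in> spec_sub sc \<sigma> (- m)"
  unfolding spec_sub_def
proof (intro CollectI allI impI)
  fix l :: complex assume l: "cmod l = 1"
  have "\<sigma> l (st z) = st (sc (l powi m) z)" using assms l by (simp add: s_st spec_sub_def)
  also have "\<dots> = sc (cnj l powi m) (st z)" by (simp add: st_sc)
  also have "cnj l powi m = l powi (- m)" by (simp only: cnj_unit l power_int_minus power_int_inverse)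
  finally show "\<sigma> l (st z) = sc (l powi - m) (st z)" .
qed

lemma sc_comm: "sc c (sc d x) = sc d (sc c x)"
proof -
  have "sc c (sc d x) = sc (c * d) x" by (rule sc_mult[symmetric])
  also have "\<dots> = sc (d * c) x" by (simp only: mult.commute)
  also have "\<dots> = sc d (sc c x)" by (rule sc_mult)
  finally show ?thesis .
qed

lemma spec_mult: assumes "x \<in> spec_sub sc \<sigma> p" "y \<in> spec_sub sc \<sigma> q"
  shows "x * y \<in> spec_sub sc \<sigma> (p + q)"
  unfolding spec_sub_def
proof (intro CollectI allI impI)
  fix l :: complex assume l: "cmod l = 1"
  then have l0: "l \<noteq> 0" by auto
  have "\<sigma> l (x * y) = sc (l powi p) x * sc (l powi q) y" using assms l by (simp add: s_mult spec_sub_def)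
  also have "\<dots> = sc (l powi p * l powi q) (x * y)" using sc_comm by (simp add: sc_ml sc_mr sc_mult)
  also have "l powi p * l powi q = l powi (p + q)" using l0 by (simp add: power_int_add)
  finally show "\<sigma> l (x * y) = sc (l powi (p + q)) (x * y)" .
qed

lemma exp_comb: "exp (- \<i> * complex_of_real t * of_int n) * exp (\<i> * complex_of_real t) powi m
   = exp (- \<i> * complex_of_real t * of_int (n - m))"
proof -
  have "- \<i> * complex_of_real t * of_int n + \<i> * complex_of_real t * of_int m = - \<i> * complex_of_real t * of_int (n - m)"
    by (simp add: of_int_diff right_diff_distrib)
  then show ?thesis by (simp add: exp_mul_n exp_add[symmetric])
qed

lemma P_mult_left:
  assumes z: "z \<in> spec_sub sc \<sigma> m"
  shows "spec_proj sc \<sigma> n (z * y) = z * spec_proj sc \<sigma> (n - m) y"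
proof -
  have "gi n (z * y) t = z * gi (n - m) y t" for t
  proof -
    let ?e = "exp (\<i> * complex_of_real t)"
    have "gi n (z * y) t = sc (exp (- \<i> * complex_of_real t * of_int n)) (sc (?e powi m) z * \<sigma> ?e y)"
      using z unfolding gi_def spec_sub_def by (simp add: s_mult)
    also have "\<dots> = z * sc (exp (- \<i> * complex_of_real t * of_int n) * ?e powi m) (\<sigma> ?e y)"
      by (simp add: sc_ml sc_mr sc_mult[symmetric])
    also have "\<dots> = z * gi (n - m) y t" unfolding gi_def exp_comb ..
    finally show ?thesis .
  qed
  then have "gi n (z * y) = (\<lambda>t. z * gi (n - m) y t)" by auto
  moreover have "integral {0..2*pi} (\<lambda>t. z * gi (n - m) y t) = z * integral {0..2*pi} (gi (n - m) y)"
    using integral_linear[OF gi_int[of "n - m" y 0 "2*pi"] bounded_linear_mult_right[of z]] by (simp add: o_def)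
  ultimately show ?thesis unfolding P_def' by simp
qed

lemma P_mult_right:
  assumes z: "z \<in> spec_sub sc \<sigma> m"
  shows "spec_proj sc \<sigma> n (y * z) = spec_proj sc \<sigma> (n - m) y * z"
proof -
  have "gi n (y * z) t = gi (n - m) y t * z" for t
  proof -
    let ?e = "exp (\<i> * complex_of_real t)"
    have "gi n (y * z) t = sc (exp (- \<i> * complex_of_real t * of_int n)) (\<sigma> ?e y * sc (?e powi m) z)"
      using z unfolding gi_def spec_sub_def by (simp add: s_mult)
    also have "\<dots> = sc (exp (- \<i> * complex_of_real t * of_int n) * ?e powi m) (\<sigma> ?e y) * z"
      by (simp add: sc_ml sc_mr sc_mult[symmetric])
    also have "\<dots> = gi (n - m) y t * z" unfolding gi_def exp_comb ..
    finally show ?thesis .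
  qed
  then have "gi n (y * z) = (\<lambda>t. gi (n - m) y t * z)" by auto
  moreover have "integral {0..2*pi} (\<lambda>t. gi (n - m) y t * z) = integral {0..2*pi} (gi (n - m) y) * z"
    using integral_linear[OF gi_int[of "n - m" y 0 "2*pi"] bounded_linear_mult_left[of z]] by (simp add: o_def)
  ultimately show ?thesis unfolding P_def' by simp
qed


lemma P_in_spec: "spec_proj sc \<sigma> n a \<in> spec_sub sc \<sigma> n"
  unfolding spec_sub_def
proof (intro CollectI allI impI)
  fix l :: complex assume l: "cmod l = 1"
  define \<theta> where "\<theta> = Arg2pi l"
  have th: "0 \<le> \<theta>" "\<theta> \<le> 2*pi" using Arg2pi[of l] by (auto simp: \<theta>_def)
  have le: "l = exp (\<i> * complex_of_real \<theta>)" using l complex_norm_eq_1_exp[of l] by (simp add: \<theta>_def)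
  have per: "gi n a (t + 2*pi) = gi n a t" for t
  proof -
    have e1: "exp (\<i> * complex_of_real (t + 2*pi)) = exp (\<i> * complex_of_real t)"
    proof -
      have "\<i> * complex_of_real (t + 2*pi) = \<i> * complex_of_real t + 2 * complex_of_real pi * \<i>"
        by (simp add: algebra_simps)
      then show ?thesis by (simp add: exp_add exp_two_pi_i)
    qed
    have "exp (- \<i> * complex_of_real (t + 2*pi) * of_int n) = exp (- \<i> * complex_of_real t * of_int n) * exp ((2 * of_int (-n) * pi) * \<i>)"
    proof -
      have "- \<i> * complex_of_real (t + 2*pi) * of_int n = - \<i> * complex_of_real t * of_int n + (2 * of_int (-n) * pi) * \<i>"
        by (simp add: algebra_simps)
      then show ?thesis by (simp add: exp_add[symmetric])
    qed
    also have "exp ((2 * of_int (-n) * pi) * \<i>) = 1"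
      by (rule exp_integer_2pi) simp
    finally show ?thesis unfolding gi_def e1 by simp
  qed
  have sh: "\<sigma> l (gi n a t) = sc (l powi n) (gi n a (\<theta> + t))" for t
  proof -
    let ?e = "exp (\<i> * complex_of_real t)"
    have "\<sigma> l (gi n a t) = sc (exp (- \<i> * complex_of_real t * of_int n)) (\<sigma> (l * ?e) a)"
      unfolding gi_def using l by (simp add: s_sc s_comp)
    also have "l * ?e = exp (\<i> * complex_of_real (\<theta> + t))"
      by (simp add: le exp_add[symmetric] distrib_left)
    also have "exp (- \<i> * complex_of_real t * of_int n) = l powi n * exp (- \<i> * complex_of_real (\<theta> + t) * of_int n)"
    proof -
      have "- \<i> * complex_of_real t * of_int n = \<i> * complex_of_real \<theta> * of_int n + (- \<i> * complex_of_real (\<theta> + t) * of_int n)"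
        by (simp add: algebra_simps)
      then show ?thesis unfolding le exp_mul_n by (simp add: exp_add[symmetric])
    qed
    finally show ?thesis unfolding gi_def by (simp add: sc_mult)
  qed
  have "\<sigma> l (spec_proj sc \<sigma> n a) = (1 / (2 * pi)) *\<^sub>R \<sigma> l (integral {0..2*pi} (gi n a))"
    unfolding P_def' using l by (simp add: s_scaleR)
  also have "\<sigma> l (integral {0..2*pi} (gi n a)) = integral {0..2*pi} (\<lambda>t. \<sigma> l (gi n a t))"
    using integral_linear[OF gi_int bl_s[OF l]] by (simp add: o_def)
  also have "\<dots> = integral {0..2*pi} (\<lambda>t. sc (l powi n) (gi n a (\<theta> + t)))" by (simp add: sh)
  also have "\<dots> = sc (l powi n) (integral {0..2*pi} (\<lambda>t. gi n a (\<theta> + t)))"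
  proof -
    have "(\<lambda>t. gi n a (\<theta> + t)) integrable_on {0..2*pi}"
      by (rule integrable_continuous_interval)
         (rule continuous_on_compose2[OF gi_cont]; auto intro!: continuous_intros)
    from integral_linear[OF this bl_sc] show ?thesis by (simp add: o_def)
  qed
  also have "integral {0..2*pi} (\<lambda>t. gi n a (\<theta> + t)) = integral {0..2*pi} (gi n a)"
    by (rule periodic_integral[OF gi_cont per th])
  finally show "\<sigma> l (spec_proj sc \<sigma> n a) = sc (l powi n) (spec_proj sc \<sigma> n a)"
    unfolding P_def' by (simp add: sc_scaleR)
qed

end


lemma sum_list_concat_map:
  "sum_list (map f (concat xss)) = sum_list (map (\<lambda>xs. sum_list (map f xs)) xss)"
  by (induction xss) auto

lemma sum_list_upt_lessThan: "sum_list (map h [0..<k]) = (\<Sum>j<k. h j)"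
  using sum_set_upt_conv_sum_list_nat[of h 0 k] by (simp add: atLeast0LessThan)

theorem lemma5p2:
  fixes sc :: "complex \<Rightarrow> 'a::{real_normed_algebra_1,banach} \<Rightarrow> 'a"
    and st :: "'a \<Rightarrow> 'a"
    and \<sigma> :: "complex \<Rightarrow> 'a \<Rightarrow> 'a"
    and B :: "'a set"
    and zR zL :: "nat \<Rightarrow> 'a"
    and k m :: nat
  assumes "cstar_alg sc st"
    and "s1_action sc st \<sigma>"
    and "dense_unital_star_subalg sc st B"
    and "spec_proj sc \<sigma> 0 ` B \<subseteq> B"
    and "\<forall>j<k. zR j \<in> B \<inter> spec_sub sc \<sigma> 1"
    and "\<forall>j<m. zL j \<in> B \<inter> spec_sub sc \<sigma> 1"
    and "(\<Sum>j<k. zR j * st (zR j)) = 1"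
    and "(\<Sum>j<m. st (zL j) * zL j) = 1"
  shows "\<forall>n::int.
           spec_proj sc \<sigma> n ` B = B \<inter> spec_sub sc \<sigma> n \<and>
           (\<exists>(mn::nat) (z::nat \<Rightarrow> 'a). (\<forall>j<mn. z j \<in> B \<inter> spec_sub sc \<sigma> n) \<and>
                (\<Sum>j<mn. z j * st (z j)) = 1) \<and>
           spec_sub sc \<sigma> n \<subseteq> closure (B \<inter> spec_sub sc \<sigma> n) \<and>
           (\<exists>(p::nat) (z::nat \<Rightarrow> 'a). (\<forall>j<p. z j \<in> B \<inter> spec_sub sc \<sigma> n) \<and>
                (\<forall>x \<in> B \<inter> spec_sub sc \<sigma> n. (\<Sum>j<p. z j * st (z j) * x) = x))"
proof -
  interpret s1act sc st \<sigma>
    by (intro s1act.intro cstar.intro s1act_axioms.intro assms(1) assms(2))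
  let ?P = "spec_proj sc \<sigma>"
  let ?A = "spec_sub sc \<sigma>"
  have dB: "1 \<in> B \<and> (\<forall>x\<in>B. \<forall>y\<in>B. x + y \<in> B \<and> x * y \<in> B) \<and> (\<forall>c. \<forall>x\<in>B. sc c x \<in> B) \<and>
      (\<forall>x\<in>B. st x \<in> B) \<and> closure B = UNIV"
    using assms(3) unfolding dense_unital_star_subalg_def .
  have B1: "1 \<in> B" using dB by blast
  have Badd: "x \<in> B \<Longrightarrow> y \<in> B \<Longrightarrow> x + y \<in> B" for x y using dB by blast
  have Bmul: "x \<in> B \<Longrightarrow> y \<in> B \<Longrightarrow> x * y \<in> B" for x y using dB by blast
  have Bst: "x \<in> B \<Longrightarrow> st x \<in> B" for x using dB by blast
  have Bcl: "closure B = UNIV" using dB by blast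
  have B0: "0 \<in> B" using dB sc_zero_left by metis
  have Bsum: "(\<And>i. i \<in> S \<Longrightarrow> f i \<in> B) \<Longrightarrow> sum f S \<in> B" for f and S :: "nat set"
    by (induction S rule: infinite_finite_induct) (auto simp: B0 Badd)
  have zRB: "zR j \<in> B" "zR j \<in> ?A 1" if "j < k" for j using assms(5) that by auto
  have zLB: "zL j \<in> B" "zL j \<in> ?A 1" if "j < m" for j using assms(6) that by auto
  have decR: "x = (\<Sum>j<k. zR j * (st (zR j) * x))" for x
  proof -
    have "x = (\<Sum>j<k. zR j * st (zR j)) * x" using assms(7) by simp
    also have "\<dots> = (\<Sum>j<k. zR j * (st (zR j) * x))" by (simp add: sum_distrib_right mult.assoc)
    finally show ?thesis .
  qed
  have decL: "x = (\<Sum>j<m. st (zL j) * (zL j * x))" for x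
  proof -
    have "x = (\<Sum>j<m. st (zL j) * zL j) * x" using assms(8) by simp
    also have "\<dots> = (\<Sum>j<m. st (zL j) * (zL j * x))" by (simp add: sum_distrib_right mult.assoc)
    finally show ?thesis .
  qed
  have PBk: "\<forall>x\<in>B. ?P (int i) x \<in> B \<and> ?P (- int i) x \<in> B" for i
  proof (induction i)
    case 0 then show ?case using assms(4) by auto
  next
    case (Suc i)
    show ?case
    proof
      fix x assume x: "x \<in> B"
      have "?P (int (Suc i)) x = (\<Sum>j<k. ?P (int (Suc i)) (zR j * (st (zR j) * x)))"
        by (subst decR[of x]) (rule P_sum)
      also have "\<dots> = (\<Sum>j<k. zR j * ?P (int i) (st (zR j) * x))"
        by (rule sum.cong) (auto simp: P_mult_left[OF zRB(2)])
      finally have e1: "?P (int (Suc i)) x = (\<Sum>j<k. zR j * ?P (int i) (st (zR j) * x))" .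
      have "?P (- int (Suc i)) x = (\<Sum>j<m. ?P (- int (Suc i)) (st (zL j) * (zL j * x)))"
        by (subst decL[of x]) (rule P_sum)
      also have "\<dots> = (\<Sum>j<m. st (zL j) * ?P (- int i) (zL j * x))"
        by (rule sum.cong) (auto simp: P_mult_left[OF spec_st[OF zLB(2)]])
      finally have e2: "?P (- int (Suc i)) x = (\<Sum>j<m. st (zL j) * ?P (- int i) (zL j * x))" .
      show "?P (int (Suc i)) x \<in> B \<and> ?P (- int (Suc i)) x \<in> B"
        unfolding e1 e2 using Suc x
        by (auto intro!: Bsum Bmul Bst zRB zLB)
    qed
  qed
  have PB: "?P n x \<in> B" if "x \<in> B" for n x
  proof (cases "n \<ge> 0")
    case True
    then have "n = int (nat n)" by simp
    then show ?thesis using PBk[of "nat n"] that by metis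
  next
    case False
    then have "n = - int (nat (- n))" by simp
    then show ?thesis using PBk[of "nat (- n)"] that by metis
  qed
  have one_A: "1 \<in> ?A 0"
    unfolding spec_sub_def by (auto simp: s_one)
  have FRk: "(\<exists>zs. set zs \<subseteq> B \<inter> ?A (int i) \<and> sum_list (map (\<lambda>z. z * st z) zs) = 1) \<and>
             (\<exists>zs. set zs \<subseteq> B \<inter> ?A (- int i) \<and> sum_list (map (\<lambda>z. z * st z) zs) = 1)" for i
  proof (induction i)
    case 0
    have "set [1] \<subseteq> B \<inter> ?A 0 \<and> sum_list (map (\<lambda>z. z * st z) [1]) = 1"
      using B1 one_A by simp
    then have "\<exists>zs. set zs \<subseteq> B \<inter> ?A 0 \<and> sum_list (map (\<lambda>z. z * st z) zs) = 1" by blast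
    then show ?case by simp
  next
    case (Suc i)
    from Suc obtain ws where ws: "set ws \<subseteq> B \<inter> ?A (int i)" "sum_list (map (\<lambda>z. z * st z) ws) = 1"
      by blast
    from Suc obtain vs where vs: "set vs \<subseteq> B \<inter> ?A (- int i)" "sum_list (map (\<lambda>z. z * st z) vs) = 1"
      by blast
    define zs where "zs = concat (map (\<lambda>w. map (\<lambda>j. w * zR j) [0..<k]) ws)"
    define us where "us = concat (map (\<lambda>w. map (\<lambda>j. w * st (zL j)) [0..<m]) vs)"
    have "set zs \<subseteq> B \<inter> ?A (int (Suc i))"
    proof
      fix z assume "z \<in> set zs"
      then obtain w j where w: "w \<in> set ws" and j: "j < k" and z: "z = w * zR j"
        by (auto simp: zs_def)
      have "z \<in> ?A (int i + 1)" unfolding z using w ws(1) by (intro spec_mult zRB(2) j) auto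
      then show "z \<in> B \<inter> ?A (int (Suc i))" using w ws(1) zRB(1)[OF j] Bmul z by (auto simp: add.commute)
    qed
    moreover have "sum_list (map (\<lambda>z. z * st z) zs) = 1"
    proof -
      have "sum_list (map (\<lambda>j. (w * zR j) * st (w * zR j)) [0..<k]) = w * st w" for w
      proof -
        have "sum_list (map (\<lambda>j. (w * zR j) * st (w * zR j)) [0..<k]) = (\<Sum>j<k. w * (zR j * st (zR j)) * st w)"
          by (simp add: sum_list_upt_lessThan st_mult mult.assoc)
        also have "\<dots> = w * st w" by (simp add: sum_distrib_left[symmetric] sum_distrib_right[symmetric] assms(7))
        finally show ?thesis .
      qed
      then show ?thesis unfolding zs_def sum_list_concat_map using ws(2) by (simp add: o_def)
    qed
    moreover have "set us \<subseteq> B \<inter> ?A (- int (Suc i))"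
    proof
      fix z assume "z \<in> set us"
      then obtain w j where w: "w \<in> set vs" and j: "j < m" and z: "z = w * st (zL j)"
        by (auto simp: us_def)
      have "z \<in> ?A (- int i + - 1)" unfolding z using w vs(1) by (intro spec_mult spec_st zLB(2) j) auto
      then show "z \<in> B \<inter> ?A (- int (Suc i))" using w vs(1) zLB(1)[OF j] Bmul Bst z by (auto simp: add.commute)
    qed
    moreover have "sum_list (map (\<lambda>z. z * st z) us) = 1"
    proof -
      have "sum_list (map (\<lambda>j. (w * st (zL j)) * st (w * st (zL j))) [0..<m]) = w * st w" for w
      proof -
        have "sum_list (map (\<lambda>j. (w * st (zL j)) * st (w * st (zL j))) [0..<m]) = (\<Sum>j<m. w * (st (zL j) * zL j) * st w)"
          by (simp add: sum_list_upt_lessThan st_mult mult.assoc)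
        also have "\<dots> = w * st w" by (simp add: sum_distrib_left[symmetric] sum_distrib_right[symmetric] assms(8))
        finally show ?thesis .
      qed
      then show ?thesis unfolding us_def sum_list_concat_map using vs(2) by (simp add: o_def)
    qed
    ultimately show ?case by blast
  qed
  have FR: "\<exists>zs. set zs \<subseteq> B \<inter> ?A n \<and> sum_list (map (\<lambda>z. z * st z) zs) = 1" for n
  proof (cases "n \<ge> 0")
    case True
    then have "n = int (nat n)" by simp
    then show ?thesis using FRk[of "nat n"] by metis
  next
    case False
    then have "n = - int (nat (- n))" by simp
    then show ?thesis using FRk[of "nat (- n)"] by metis
  qed
  show ?thesis
  proof
    fix n :: int
    have part1: "?P n ` B = B \<inter> ?A n"
    proof
      show "?P n ` B \<subseteq> B \<inter> ?A n" using PB P_in_spec by auto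
      show "B \<inter> ?A n \<subseteq> ?P n ` B"
      proof
        fix x assume "x \<in> B \<inter> ?A n"
        then show "x \<in> ?P n ` B" using P_eigen[of x n] by (metis IntD1 IntD2 image_eqI)
      qed
    qed
    obtain zs where zs: "set zs \<subseteq> B \<inter> ?A n" "sum_list (map (\<lambda>z. z * st z) zs) = 1"
      using FR by blast
    have zin: "\<forall>j<length zs. zs ! j \<in> B \<inter> ?A n" using zs(1) nth_mem by blast
    have zsum: "(\<Sum>j<length zs. zs ! j * st (zs ! j)) = 1"
      using zs(2) unfolding sum_list_sum_nth by (simp add: atLeast0LessThan)
    have part2: "\<exists>(mn::nat) (z::nat \<Rightarrow> 'a). (\<forall>j<mn. z j \<in> B \<inter> ?A n) \<and> (\<Sum>j<mn. z j * st (z j)) = 1"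
      using zin zsum by blast
    have part4: "\<exists>(p::nat) (z::nat \<Rightarrow> 'a). (\<forall>j<p. z j \<in> B \<inter> ?A n) \<and>
                (\<forall>x \<in> B \<inter> ?A n. (\<Sum>j<p. z j * st (z j) * x) = x)"
    proof (intro exI conjI)
      show "\<forall>j<length zs. zs ! j \<in> B \<inter> ?A n" by (rule zin)
      show "\<forall>x \<in> B \<inter> ?A n. (\<Sum>j<length zs. zs ! j * st (zs ! j) * x) = x"
        using zsum by (simp add: sum_distrib_right[symmetric])
    qed
    have part3: "?A n \<subseteq> closure (B \<inter> ?A n)"
    proof
      fix x assume x: "x \<in> ?A n"
      show "x \<in> closure (B \<inter> ?A n)"
        unfolding closure_approachable
      proof (intro allI impI)
        fix e :: real assume e: "e > 0"
        have "x \<in> closure B" using Bcl by simp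
        then obtain b where b: "b \<in> B" "dist b x < e / 2"
          using e unfolding closure_approachable by (meson half_gt_zero)
        have "dist (?P n b) x = norm (?P n (b - x))"
          using P_eigen[OF x] by (simp add: dist_norm P_diff)
        also have "\<dots> \<le> 2 * norm (b - x)" by (rule P_bound)
        also have "\<dots> < e" using b(2) by (simp add: dist_norm)
        finally have "dist (?P n b) x < e" .
        moreover have "?P n b \<in> B \<inter> ?A n" using PB[OF b(1)] P_in_spec by auto
        ultimately show "\<exists>y\<in>B \<inter> ?A n. dist y x < e" by blast
      qed
    qed
    show "?P n ` B = B \<inter> ?A n \<and>
           (\<exists>(mn::nat) (z::nat \<Rightarrow> 'a). (\<forall>j<mn. z j \<in> B \<inter> ?A n) \<and> (\<Sum>j<mn. z j * st (z j)) = 1) \<and>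
           ?A n \<subseteq> closure (B \<inter> ?A n) \<and>
           (\<exists>(p::nat) (z::nat \<Rightarrow> 'a). (\<forall>j<p. z j \<in> B \<inter> ?A n) \<and>
                (\<forall>x \<in> B \<inter> ?A n. (\<Sum>j<p. z j * st (z j) * x) = x))"
      using part1 part2 part3 part4 by blast
  qed
qed

end
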